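(* Let $q$ be a prime power, $n\ge2$, and $s$ an odd positive integer with $\gcd(s,n)=1$. If $n$ and $d$ have opposite parity and $1\le d\le n-1$, then the code $$\mathcal{H}_{n,d,s}=\Big\{\sum_{j=1}^{\frac{n-d+1}{2}}\Big((b_jx)^{q^{2s(n-j+1)}}+b_j^{q^s}x^{q^{2sj}}\Big): b_1,\dots,b_{\frac{n-d+1}{2}}\in\mathbb{F}_{q^{2n}}\Big\}$$ is an $(n-d+1)$-design. If $n$ and $d$ are both odd with $1\le d\le n-1$, then the code $$\mathcal{E}_{n,d,s}=\Big\{(b_0x)^{q^{s(n+1)}}+\sum_{j=1}^{\frac{n-d}{2}}\Big((b_jx)^{q^{s(n+2j+1)}}+b_j^{q^s}x^{q^{s(n-2j+1)}}\Big): b_0\in\mathbb{F}_{q^n},\ b_1,\dots,b_{\frac{n-d}{2}}\in\mathbb{F}_{q^{2n}}\Big\}$$ is an $(n-d+1)$-design.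
   Context: Polynomials are $\mathbb{F}_{q^2}$-linearized polynomials over $\mathbb{F}_{q^{2n}}$ taken modulo $x^{q^{2n}}-x$, i.e. elements of $\mathcal{L}_{n,q^2}=\{\sum_{i=0}^{n-1}a_ix^{q^{2i}}:a_i\in\mathbb{F}_{q^{2n}}\}$, viewed as $\mathbb{F}_{q^2}$-linear maps $\mathbb{F}_{q^{2n}}\to\mathbb{F}_{q^{2n}}$; the rank of $f$ is $\dim_{\mathbb{F}_{q^2}}$ of its image. The paper models Hermitian forms of order $n$ over $\mathbb{F}_{q^2}$ by the set $\mathcal{H}_n(q^2)=\{\sum_{i=0}^{n-1}c_ix^{q^{2i}}: c_{n-i+1}=c_i^{q^{2n-2i+1}},\ i\in\{0,\dots,n-1\}\}$ (indices modulo $n$), which is $\mathbb{F}_q$-linearly and rank-preservingly identified with the set $\mathrm{H}_n(q^2)$ of Hermitian $n\times n$ matrices over $\mathbb{F}_{q^2}$. On $\mathcal{H}_n(q^2)$ the pairing is $b(f,g)=\mathrm{Tr}_{q^{2n}/q^2}\big(\sum_{i=0}^{n-1}a_ib_i\big)$ for $f=\sum a_ix^{q^{2i}}$, $g=\sum b_ix^{q^{2i}}$, where $\mathrm{Tr}_{q^{2n}/q^2}(x)=\sum_{i=0}^{n-1}x^{q^{2i}}$; the dual of an additive code $\mathcal{C}$ is $\mathcal{C}^\perp=\{f\in\mathcal{H}_n(q^2): b(f,g)=0\ \forall g\in\mathcal{C}\}$. An additive code $\mathcal{C}$ is a $t$-design if its dual $\mathcal{C}^\perp$ contains no nonzero element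 of rank in $\{1,\dots,t\}$ (equivalently, in the matrix model, the dual inner distribution satisfies $A'_1=\dots=A'_t=0$). The codes $\mathcal{H}_{n,d,s}$ and $\mathcal{E}_{n,d,s}$ are known (Schmidt) to be maximum $\mathbb{F}_q$-linear Hermitian $d$-codes, i.e. of size $q^{n(n-d+1)}$ with all nonzero elements of rank at least $d$. *)

theory Defs
  imports "HOL-Computational_Algebra.Primes"
begin

(* The field F_{q^{2n}} is an abstract finite field type 'a with CARD('a) = q^(2n).
   A linearized polynomial  sum_{i<n} a_i x^(q^(2i))  is represented by its coefficient
   vector a :: nat => 'a (with a i = 0 for i >= n); its associated map is lin_eval. *)

definition prime_power :: "nat \<Rightarrow> bool" where
  "prime_power q \<longleftrightarrow> (\<exists>p k. prime p \<and> k \<ge> 1 \<and> q = p ^ k)"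

definition lin_eval :: "nat \<Rightarrow> nat \<Rightarrow> (nat \<Rightarrow> 'a::field) \<Rightarrow> 'a \<Rightarrow> 'a" where
  "lin_eval q n a = (\<lambda>x. \<Sum>i<n. a i * x ^ (q ^ (2 * i)))"

definition coeff_vecs :: "nat \<Rightarrow> (nat \<Rightarrow> 'a::field) set" where
  "coeff_vecs n = {a. \<forall>i\<ge>n. a i = 0}"

definition lin_coeffs :: "nat \<Rightarrow> nat \<Rightarrow> ('a::field \<Rightarrow> 'a) \<Rightarrow> (nat \<Rightarrow> 'a)" where
  "lin_coeffs q n f = (THE a. a \<in> coeff_vecs n \<and> f = lin_eval q n a)"

definition herm_set :: "nat \<Rightarrow> nat \<Rightarrow> (nat \<Rightarrow> 'a::field) set" where
  "herm_set q n = {c \<in> coeff_vecs n.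
      \<forall>i<n. c ((n - i + 1) mod n) = c i ^ (q ^ (2 * n - 2 * i + 1))}"

definition rel_trace :: "nat \<Rightarrow> nat \<Rightarrow> 'a::field \<Rightarrow> 'a" where
  "rel_trace q n x = (\<Sum>i<n. x ^ (q ^ (2 * i)))"

definition pairing :: "nat \<Rightarrow> nat \<Rightarrow> (nat \<Rightarrow> 'a::field) \<Rightarrow> (nat \<Rightarrow> 'a) \<Rightarrow> 'a" where
  "pairing q n a b = rel_trace q n (\<Sum>i<n. a i * b i)"

definition dual_code :: "nat \<Rightarrow> nat \<Rightarrow> ('a::field \<Rightarrow> 'a) set \<Rightarrow> (nat \<Rightarrow> 'a) set" where
  "dual_code q n C = {f \<in> herm_set q n. \<forall>g\<in>C. pairing q n f (lin_coeffs q n g) = 0}"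

definition subfield_q2 :: "nat \<Rightarrow> 'a::field set" where
  "subfield_q2 q = {x. x ^ (q ^ 2) = x}"

definition span_q2 :: "nat \<Rightarrow> 'a::field set \<Rightarrow> 'a set" where
  "span_q2 q S = {\<Sum>s\<in>S. c s * s | c. \<forall>s\<in>S. c s \<in> subfield_q2 q}"

definition dim_q2 :: "nat \<Rightarrow> 'a::field set \<Rightarrow> nat" where
  "dim_q2 q V = (LEAST k. \<exists>S. finite S \<and> card S = k \<and> S \<subseteq> V \<and> V \<subseteq> span_q2 q S)"

definition lin_rank :: "nat \<Rightarrow> nat \<Rightarrow> (nat \<Rightarrow> 'a::field) \<Rightarrow> nat" where
  "lin_rank q n a = dim_q2 q (range (lin_eval q n a))"

definition is_design :: "nat \<Rightarrow> nat \<Rightarrow> ('a::field \<Rightarrow> 'a) set \<Rightarrow> nat \<Rightarrow> bool" where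
  "is_design q n C t \<longleftrightarrow>
     (\<forall>f\<in>dual_code q n C. f \<noteq> (\<lambda>_. 0) \<longrightarrow> lin_rank q n f \<notin> {1..t})"

definition H_code :: "nat \<Rightarrow> nat \<Rightarrow> nat \<Rightarrow> nat \<Rightarrow> ('a::field \<Rightarrow> 'a) set" where
  "H_code q n d s = {(\<lambda>x. \<Sum>j\<in>{1..(n - d + 1) div 2}.
       (b j * x) ^ (q ^ (2 * s * (n - j + 1))) + b j ^ (q ^ s) * x ^ (q ^ (2 * s * j))) | b. True}"

(* b0 ranges over F_{q^n} = {y. y^(q^n) = y} *)
definition E_code :: "nat \<Rightarrow> nat \<Rightarrow> nat \<Rightarrow> nat \<Rightarrow> ('a::field \<Rightarrow> 'a) set" where
  "E_code q n d s = {(\<lambda>x. (b0 * x) ^ (q ^ (s * (n + 1))) + (\<Sum>j\<in>{1..(n - d) div 2}.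
       (b j * x) ^ (q ^ (s * (n + 2 * j + 1))) + b j ^ (q ^ s) * x ^ (q ^ (s * (n - 2 * j + 1)))))
     | b0 b. b0 ^ (q ^ n) = b0}"

end

theory Submission
  imports Defs "HOL-Computational_Algebra.Polynomial" "HOL-Number_Theory.Cong" "HOL-Library.FuncSet"
begin
locale ffield =
  fixes q n :: nat and ty :: "'a::{field,finite} itself"
  assumes pp: "prime_power q" and card: "card (UNIV::'a set) = q^(2*n)" and n1: "n \<ge> 1"
begin

lemma q2: "q \<ge> 2"
proof -
  obtain p k where p: "prime p" "k \<ge> 1" "q = p ^ k" using pp unfolding prime_power_def by blast
  have "p \<ge> 2" using p(1) prime_ge_2_nat by blast
  hence "p ^ 1 \<le> p ^ k" using p(2) by (intro power_increasing) auto
  thus ?thesis using p \<open>p \<ge> 2\<close> by simp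
qed

lemma char_eq: "\<exists>k. q = CHAR('a) ^ k"
proof -
  obtain p k where p: "prime p" "k \<ge> 1" "q = p ^ k" using pp unfolding prime_power_def by blast
  have fin: "finite (UNIV::'a set)" by simp
  have pc: "prime CHAR('a)"
    using prime_CHAR_semidom[where ?'a='a] finite_imp_CHAR_pos[OF fin] by blast
  have "CHAR('a) dvd card (UNIV::'a set)"
  proof -
    have "(\<Sum>y\<in>(UNIV::'a set). y + 1) = (\<Sum>y\<in>(UNIV::'a set). y)"
      by (rule sum.reindex_bij_witness[of _ "\<lambda>y. y - 1" "\<lambda>y. y + 1"]) auto
    hence "of_nat (card (UNIV::'a set)) = (0::'a)" by (simp add: sum.distrib)
    thus ?thesis using of_nat_eq_0_iff_char_dvd by blast
  qed
  hence "CHAR('a) dvd p ^ (k * (2*n))" using card p by (simp add: power_mult)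
  hence "CHAR('a) dvd p" using pc prime_dvd_power by blast
  hence "CHAR('a) = p" using pc p(1) by (simp add: primes_dvd_imp_eq)
  thus ?thesis using p by blast
qed

lemma add_pow: "((x::'a) + y) ^ (q^e) = x^(q^e) + y^(q^e)"
proof -
  obtain k where k: "q = CHAR('a) ^ k" using char_eq by blast
  have fin: "finite (UNIV::'a set)" by simp
  have pc: "prime CHAR('a)"
    using prime_CHAR_semidom[where ?'a='a] finite_imp_CHAR_pos[OF fin] by blast
  show ?thesis by (rule freshmans_dream'[OF pc, where n="k*e"]) (simp add: k power_mult)
qed

lemma neg_pow: "(- (x::'a)) ^ (q^e) = - (x^(q^e))"
proof -
  have "0 = (x + - x) ^ (q^e)" using q2 by simp
  also have "\<dots> = x^(q^e) + (-x)^(q^e)" by (rule add_pow)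
  finally show ?thesis by (simp add: eq_neg_iff_add_eq_0 add.commute)
qed

lemma diff_pow: "((x::'a) - y) ^ (q^e) = x^(q^e) - y^(q^e)"
  using add_pow[of x "-y" e] neg_pow[of y e] by simp

lemma sum_pow: "(\<Sum>i\<in>A. (f i::'a)) ^ (q^e) = (\<Sum>i\<in>A. f i ^ (q^e))"
proof (induction A rule: infinite_finite_induct)
  case (infinite A) then show ?case using q2 by simp
next
  case empty then show ?case using q2 by simp
next
  case (insert x F) then show ?case by (simp add: add_pow)
qed

lemma pow_card: "(x::'a) ^ (q^(2*n)) = x"
proof (cases "x = 0")
  case False
  let ?N = "card (UNIV :: 'a set)"
  have "x * (\<Prod>y\<in>UNIV-{0}. x * y) = x * x ^ (?N - 1) * \<Prod>(UNIV-{0})"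
    by (simp add: prod.distrib mult_ac)
  also have "x * x ^ (?N - 1) = x ^ Suc (?N - 1)"
    by (subst power_Suc) auto
  also have "Suc (?N - 1) = ?N"
    using finite_UNIV_card_ge_0[where ?'a = 'a] by simp
  also have "(\<Prod>y\<in>UNIV-{0}. x * y) = (\<Prod>y\<in>UNIV-{0}. y)"
    by (rule prod.reindex_bij_witness[of _ "\<lambda>y. y / x" "\<lambda>y. x * y"]) (use False in auto)
  finally show ?thesis
    by (simp add: card)
qed (use q2 n1 in auto)

lemma pow_card_mult: "(x::'a) ^ (q^(2*n*j)) = x"
proof (induction j)
  case 0 then show ?case by simp
next
  case (Suc j)
  have "x ^ (q^(2*n*Suc j)) = (x ^ (q^(2*n*j))) ^ (q^(2*n))"
    by (simp add: power_mult[symmetric] power_add[symmetric] algebra_simps)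
  then show ?case using Suc pow_card by simp
qed

lemma pow_mod: "(x::'a) ^ (q^e) = x ^ (q^(e mod (2*n)))"
proof -
  have "e = e mod (2*n) + 2*n*(e div (2*n))" by simp
  hence "q^e = q^(2*n*(e div (2*n))) * q^(e mod (2*n))"
    by (metis power_add mult.commute)
  hence "x ^ (q^e) = (x ^ (q^(2*n*(e div (2*n))))) ^ (q^(e mod (2*n)))"
    by (simp add: power_mult)
  thus ?thesis using pow_card_mult by simp
qed

lemma inj_pow: "(x::'a) ^ (q^e) = y ^ (q^e) \<Longrightarrow> x = y"
  using diff_pow[of x y e] by (simp add: q2)

lemma poly_zero:
  assumes "finite I" "inj_on \<pi> I" "\<And>i. i \<in> I \<Longrightarrow> \<pi> i < 2*n"
    and "\<And>x::'a. (\<Sum>i\<in>I. c i * x^(q^(\<pi> i))) = 0" and "i0 \<in> I"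
  shows "c i0 = 0"
proof -
  define p where "p = (\<Sum>i\<in>I. monom (c i) (q^(\<pi> i)))"
  have ev: "poly p x = 0" for x
    using assms(4)[of x] by (simp add: p_def poly_sum poly_monom)
  have deg: "degree p < q^(2*n)"
    unfolding p_def
  proof (rule degree_sum_less)
    fix i assume "i \<in> I"
    have "q^(\<pi> i) < q^(2*n)" using assms(3)[OF \<open>i \<in> I\<close>] q2 by (intro power_strict_increasing) auto
    thus "degree (monom (c i) (q ^ \<pi> i)) < q ^ (2 * n)" using degree_monom_le le_less_trans by blast
  qed (use q2 in simp)
  have "p = 0"
  proof (rule ccontr)
    assume "p \<noteq> 0"
    hence "card {x. poly p x = 0} \<le> degree p" by (rule card_poly_roots_bound)
    also have "{x. poly p x = 0} = (UNIV::'a set)" using ev by auto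
    finally show False using deg card by simp
  qed
  have "coeff p (q^(\<pi> i0)) = c i0"
  proof -
    have "coeff p (q^(\<pi> i0)) = (\<Sum>i\<in>I. if i = i0 then c i else 0)"
      unfolding p_def coeff_sum coeff_monom
    proof (intro sum.cong refl)
      fix i assume "i \<in> I"
      have "q^(\<pi> i) = q^(\<pi> i0) \<longleftrightarrow> i = i0"
        using assms(2,5) \<open>i \<in> I\<close> q2 by (auto simp: inj_on_def power_inject_exp)
      then show "(if q ^ \<pi> i = q ^ \<pi> i0 then c i else 0) = (if i = i0 then c i else 0)" by simp
    qed
    also have "\<dots> = c i0" using assms(1,5) by simp
    finally show ?thesis .
  qed
  thus ?thesis using \<open>p = 0\<close> by simp
qed

lemma card_fix: "card {x::'a. x^(q^2) = x} \<le> q^2"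
proof -
  define p :: "'a poly" where "p = monom 1 (q^2) - monom 1 1"
  have "q^2 \<ge> 2^2" using q2 by (rule power_mono) auto
  hence qq: "q^2 \<noteq> 1" "q^2 \<ge> 1" by auto
  have "coeff p (q^2) = 1" using qq by (simp add: p_def del: One_nat_def)
  hence "p \<noteq> 0" by auto
  have "degree p \<le> q^2" unfolding p_def
    by (rule order.trans[OF degree_diff_le_max]) (use qq in \<open>auto simp: degree_monom_eq q2\<close>)
  have "{x::'a. x^(q^2) = x} = {x. poly p x = 0}" by (auto simp: p_def poly_monom)
  also have "card \<dots> \<le> degree p" using \<open>p \<noteq> 0\<close> by (rule card_poly_roots_bound)
  finally show ?thesis using \<open>degree p \<le> q^2\<close> by simp
qed

lemma fix_sigma:
  assumes "coprime s n" "s > 0" "(x::'a) ^ (q^(2*s)) = x"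
  shows "x ^ (q^2) = x"
proof -
  obtain a b where ab: "s * a = n * b + gcd s n" using bezout_nat[of s n] assms(2) by auto
  hence ab': "s * a = n * b + 1" using assms(1) by simp
  have it: "x ^ (q^(2*s*j)) = x" for j
  proof (induction j)
    case 0 then show ?case by simp
  next
    case (Suc j)
    have "x ^ (q^(2*s*Suc j)) = (x ^ (q^(2*s*j))) ^ (q^(2*s))"
      by (simp add: power_mult[symmetric] power_add[symmetric] algebra_simps)
    then show ?case using Suc assms(3) by simp
  qed
  have "x = x ^ (q^(2*s*a))" using it by simp
  also have "2*s*a = 2*n*b + 2" using ab' by simp
  also have "x ^ (q^(2*n*b + 2)) = (x ^ (q^(2*n*b))) ^ (q^2)"
    by (simp add: power_mult[symmetric] power_add[symmetric] algebra_simps)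
  also have "\<dots> = x ^ (q^2)" using pow_card_mult by simp
  finally show ?thesis by simp
qed

end

lemma swap_sum:
  fixes b w :: "nat \<Rightarrow> 'b::comm_ring_1"
  shows "(\<Sum>l\<le>k. b l * (\<Sum>m<l. w m)) = (\<Sum>m<k. (\<Sum>l\<in>{Suc m..k}. b l) * w m)"
proof (induction k)
  case 0 then show ?case by simp
next
  case (Suc k)
  have "(\<Sum>m<Suc k. (\<Sum>l\<in>{Suc m..Suc k}. b l) * w m)
      = (\<Sum>m<Suc k. (\<Sum>l\<in>{Suc m..k}. b l) * w m + b (Suc k) * w m)"
    by (intro sum.cong refl) (simp add: algebra_simps)
  also have "\<dots> = (\<Sum>m<Suc k. (\<Sum>l\<in>{Suc m..k}. b l) * w m) + b (Suc k) * (\<Sum>m<Suc k. w m)"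
    by (simp add: sum.distrib sum_distrib_left distrib_left)
  also have "(\<Sum>m<Suc k. (\<Sum>l\<in>{Suc m..k}. b l) * w m) = (\<Sum>m<k. (\<Sum>l\<in>{Suc m..k}. b l) * w m)"
    by simp
  finally show ?case using Suc by simp
qed

context ffield
begin

lemma tele:
  "(y::'a) ^ (q^(2*s*l)) - y = (\<Sum>m<l. (y^(q^(2*s)) - y) ^ (q^(2*s*m)))"
proof (induction l)
  case 0 then show ?case by simp
next
  case (Suc l)
  have "(y^(q^(2*s)) - y) ^ (q^(2*s*l)) = (y^(q^(2*s)))^(q^(2*s*l)) - y ^ (q^(2*s*l))"
    by (rule diff_pow)
  also have "(y^(q^(2*s)))^(q^(2*s*l)) = y ^ (q^(2*s*Suc l))"
    by (simp add: power_mult[symmetric] power_add[symmetric] algebra_simps)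
  finally have e: "(y^(q^(2*s)) - y) ^ (q^(2*s*l)) = y ^ (q^(2*s*Suc l)) - y ^ (q^(2*s*l))" .
  show ?case by (simp only: sum.lessThan_Suc Suc.IH[symmetric] e) simp
qed

lemma ker_bound:
  assumes cop: "coprime s n" "s > 0"
  shows "c k \<noteq> 0 \<Longrightarrow> card {y::'a. (\<Sum>l\<le>k. c l * y^(q^(2*s*l))) = 0} \<le> (q^2)^k"
proof (induction k arbitrary: c)
  case 0
  have "{y::'a. (\<Sum>l\<le>0. c l * y^(q^(2*s*l))) = 0} = {0}" using 0 q2 by auto
  then show ?case by simp
next
  case (Suc k)
  define K where "K = {y::'a. (\<Sum>l\<le>Suc k. c l * y^(q^(2*s*l))) = 0}"
  show ?case
  proof (cases "K \<subseteq> {0}")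
    case True
    hence "card K \<le> card {0::'a}" by (intro card_mono) auto
    also have "\<dots> \<le> (q^2)^Suc k" using q2 by simp
    finally show ?thesis unfolding K_def .
  next
    case False
    then obtain u where u: "u \<in> K" "u \<noteq> 0" by auto
    define b where "b l = c l * u^(q^(2*s*l))" for l
    define c' where "c' m = (\<Sum>l\<in>{Suc m..Suc k}. b l)" for m
    define h where "h y = (\<Sum>l\<le>Suc k. b l * y^(q^(2*s*l)))" for y
    define g where "g z = (\<Sum>m\<le>k. c' m * z^(q^(2*s*m)))" for z
    have c'k: "c' k \<noteq> 0" using Suc.prems u(2) by (simp add: c'_def b_def)
    have IH: "card {z. g z = 0} \<le> (q^2)^k" unfolding g_def by (rule Suc.IH[of c', OF c'k])
    have sb: "(\<Sum>l\<le>Suc k. b l) = 0" using u(1) by (simp add: K_def b_def)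
    have hg: "h y = g (y^(q^(2*s)) - y)" for y
    proof -
      have "h y = (\<Sum>l\<le>Suc k. b l * y^(q^(2*s*l))) - (\<Sum>l\<le>Suc k. b l) * y"
        using sb by (simp add: h_def)
      also have "\<dots> = (\<Sum>l\<le>Suc k. b l * (y^(q^(2*s*l)) - y))"
        unfolding right_diff_distrib sum_subtractf sum_distrib_right ..
      also have "\<dots> = (\<Sum>l\<le>Suc k. b l * (\<Sum>m<l. (y^(q^(2*s)) - y) ^ (q^(2*s*m))))"
        by (simp only: tele[of y s])
      also have "\<dots> = (\<Sum>m<Suc k. c' m * (y^(q^(2*s)) - y) ^ (q^(2*s*m)))"
        unfolding c'_def by (rule swap_sum)
      also have "\<dots> = g (y^(q^(2*s)) - y)" by (simp add: g_def lessThan_Suc_atMost)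
      finally show ?thesis .
    qed
    have Kim: "K = (\<lambda>y. u * y) ` {y. h y = 0}"
    proof -
      have hu: "(\<Sum>l\<le>Suc k. c l * (u*y)^(q^(2*s*l))) = h y" for y
        by (simp add: h_def b_def power_mult_distrib mult_ac)
      show ?thesis
      proof (intro set_eqI iffI)
        fix x assume "x \<in> K"
        hence "h (x/u) = 0" using hu[of "x/u"] u(2) by (simp add: K_def)
        thus "x \<in> (\<lambda>y. u * y) ` {y. h y = 0}" using u(2) by (intro image_eqI[of _ _ "x/u"]) auto
      next
        fix x assume "x \<in> (\<lambda>y. u * y) ` {y. h y = 0}"
        then obtain y where "h y = 0" "x = u * y" by auto
        thus "x \<in> K" using hu[of y] by (simp add: K_def)
      qed
    qed
    have fib: "card {y::'a. y^(q^(2*s)) - y = z} \<le> q^2" for z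
    proof (cases "{y::'a. y^(q^(2*s)) - y = z} = {}")
      case True then show ?thesis by simp
    next
      case False
      then obtain y0 where y0: "y0^(q^(2*s)) - y0 = z" by auto
      have "(\<lambda>y. y - y0) ` {y::'a. y^(q^(2*s)) - y = z} \<subseteq> {x. x^(q^2) = x}"
      proof
        fix x assume "x \<in> (\<lambda>y. y - y0) ` {y::'a. y^(q^(2*s)) - y = z}"
        then obtain y where y: "y^(q^(2*s)) - y = z" "x = y - y0" by auto
        have "x^(q^(2*s)) = y^(q^(2*s)) - y0^(q^(2*s))" using y by (simp add: diff_pow)
        also have "\<dots> = x" using y y0 by (simp add: algebra_simps)
        finally have "x^(q^(2*s)) = x" .
        thus "x \<in> {x. x^(q^2) = x}" using fix_sigma[OF cop] by simp
      qed
      hence "card ((\<lambda>y. y - y0) ` {y::'a. y^(q^(2*s)) - y = z}) \<le> card {x::'a. x^(q^2) = x}"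
        by (intro card_mono) auto
      also have "\<dots> \<le> q^2" by (rule card_fix)
      also have "card ((\<lambda>y. y - y0) ` {y::'a. y^(q^(2*s)) - y = z}) = card {y::'a. y^(q^(2*s)) - y = z}"
        by (rule card_image) (auto simp: inj_on_def)
      finally show ?thesis .
    qed
    have "card K \<le> card {y. h y = 0}" unfolding Kim by (rule card_image_le) simp
    also have "{y. h y = 0} \<subseteq> (\<Union>z\<in>{z. g z = 0}. {y::'a. y^(q^(2*s)) - y = z})"
      using hg by auto
    hence "card {y. h y = 0} \<le> card (\<Union>z\<in>{z. g z = 0}. {y::'a. y^(q^(2*s)) - y = z})"
      by (intro card_mono) auto
    also have "\<dots> \<le> (\<Sum>z\<in>{z. g z = 0}. card {y::'a. y^(q^(2*s)) - y = z})"
      by (rule card_UN_le) simp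
    also have "\<dots> \<le> (\<Sum>z\<in>{z. g z = 0}. q^2)" by (intro sum_mono fib)
    also have "\<dots> = card {z. g z = 0} * q^2" by simp
    also have "\<dots> \<le> (q^2)^k * q^2" using IH by simp
    also have "\<dots> = (q^2)^Suc k" by simp
    finally show ?thesis unfolding K_def .
  qed
qed

end

lemma sum_even_odd:
  fixes g :: "nat \<Rightarrow> 'b::comm_monoid_add"
  shows "(\<Sum>i<2*n. g i) = (\<Sum>m<n. g (2*m) + g (2*m+1))"
  by (induction n) (simp_all add: add_ac)

lemma even_mod_2n: "even ((x::nat) mod (2*n)) = even x"
  by (simp add: even_iff_mod_2_eq_zero mod_mod_cancel)

context ffield
begin

lemma Qgt1: "1 < q^2"
proof -
  have "2^2 \<le> q^2" using q2 by (rule power_mono) auto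
  thus ?thesis by simp
qed

lemma card_span: "finite S \<Longrightarrow> card (span_q2 q (S::'a set)) \<le> (q^2)^(card S)"
proof -
  assume fS: "finite S"
  have "span_q2 q S \<subseteq> (\<lambda>c. \<Sum>s\<in>S. c s * s) ` (S \<rightarrow>\<^sub>E subfield_q2 q)"
  proof
    fix v assume "v \<in> span_q2 q S"
    then obtain c where c: "v = (\<Sum>s\<in>S. c s * s)" "\<forall>s\<in>S. c s \<in> subfield_q2 q"
      unfolding span_q2_def by blast
    have "v = (\<Sum>s\<in>S. restrict c S s * s)" using c(1) by simp
    moreover have "restrict c S \<in> S \<rightarrow>\<^sub>E subfield_q2 q" using c(2) by auto
    ultimately show "v \<in> (\<lambda>c. \<Sum>s\<in>S. c s * s) ` (S \<rightarrow>\<^sub>E subfield_q2 q)" by blast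
  qed
  hence "card (span_q2 q S) \<le> card ((\<lambda>c. \<Sum>s\<in>S. c s * s) ` (S \<rightarrow>\<^sub>E subfield_q2 q))"
    by (intro card_mono finite_imageI finite_PiE fS) auto
  also have "\<dots> \<le> card (S \<rightarrow>\<^sub>E (subfield_q2 q :: 'a set))" by (intro card_image_le finite_PiE fS) simp
  also have "\<dots> = card (subfield_q2 q :: 'a set) ^ card S" using fS by (simp add: card_PiE)
  also have "\<dots> \<le> (q^2)^(card S)"
    using card_fix by (intro power_mono) (auto simp: subfield_q2_def)
  finally show ?thesis .
qed

lemma dim_lower:
  assumes "(q^2)^m \<le> card (V::'a set)"
  shows "m \<le> dim_q2 q V"
proof -
  let ?P = "\<lambda>k. \<exists>S. finite S \<and> card S = k \<and> S \<subseteq> V \<and> V \<subseteq> span_q2 q S"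
  have "?P (card V)"
  proof (intro exI conjI)
    show "V \<subseteq> span_q2 q V"
    proof
      fix v assume "v \<in> V"
      have "(\<Sum>s\<in>V. (if s = v then 1 else 0) * s) = (\<Sum>s\<in>V. if s = v then s else 0)"
        by (intro sum.cong) auto
      also have "\<dots> = v" using \<open>v \<in> V\<close> by simp
      finally have "v = (\<Sum>s\<in>V. (if s = v then 1 else 0) * s)" by simp
      moreover have "\<forall>s\<in>V. (if s = v then 1 else 0) \<in> subfield_q2 q" using q2 by (auto simp: subfield_q2_def)
      ultimately show "v \<in> span_q2 q V" unfolding span_q2_def
        by (intro CollectI exI[of _ "\<lambda>s. if s = v then 1 else 0"]) simp
    qed
  qed auto
  hence "?P (dim_q2 q V)" unfolding dim_q2_def by (rule LeastI)
  then obtain S where S: "finite S" "card S = dim_q2 q V" "V \<subseteq> span_q2 q S" by blast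
  have "(q^2)^m \<le> card (span_q2 q S)" using assms S(3) by (meson card_mono finite order.trans)
  also have "\<dots> \<le> (q^2)^(card S)" by (rule card_span[OF S(1)])
  finally have "(q^2)^m \<le> (q^2)^(card S)" .
  hence "m \<le> card S" using Qgt1 by (subst (asm) power_increasing_iff) auto
  thus ?thesis using S(2) by simp
qed

lemma card_ker_im:
  fixes \<phi> :: "'a \<Rightarrow> 'a"
  assumes add: "\<And>x y. \<phi> (x + y) = \<phi> x + \<phi> y"
  shows "card (UNIV::'a set) \<le> card {x. \<phi> x = 0} * card (range \<phi>)"
proof -
  have fib: "card {x. \<phi> x = y} \<le> card {x. \<phi> x = 0}" for y
  proof (cases "{x. \<phi> x = y} = {}")
    case True then show ?thesis by simp
  next
    case False
    then obtain x0 where x0: "\<phi> x0 = y" by auto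
    have "(\<lambda>x. x - x0) ` {x. \<phi> x = y} \<subseteq> {x. \<phi> x = 0}"
    proof
      fix z assume "z \<in> (\<lambda>x. x - x0) ` {x. \<phi> x = y}"
      then obtain x where x: "\<phi> x = y" "z = x - x0" by auto
      have "\<phi> x = \<phi> (z + x0)" using x by simp
      also have "\<dots> = \<phi> z + \<phi> x0" by (rule add)
      finally show "z \<in> {x. \<phi> x = 0}" using x x0 by simp
    qed
    hence "card ((\<lambda>x. x - x0) ` {x. \<phi> x = y}) \<le> card {x. \<phi> x = 0}" by (intro card_mono) auto
    also have "card ((\<lambda>x. x - x0) ` {x. \<phi> x = y}) = card {x. \<phi> x = y}"
      by (rule card_image) (auto simp: inj_on_def)
    finally show ?thesis .
  qed
  have "UNIV = (\<Union>y\<in>range \<phi>. {x. \<phi> x = y})" by auto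
  hence "card (UNIV::'a set) = card (\<Union>y\<in>range \<phi>. {x. \<phi> x = y})" by simp
  also have "\<dots> \<le> (\<Sum>y\<in>range \<phi>. card {x. \<phi> x = y})" by (rule card_UN_le) simp
  also have "\<dots> \<le> (\<Sum>y\<in>range \<phi>. card {x. \<phi> x = 0})" by (intro sum_mono fib)
  also have "\<dots> = card {x. \<phi> x = 0} * card (range \<phi>)" by simp
  finally show ?thesis .
qed

lemma lin_eval_add: "lin_eval q n a (x + y) = lin_eval q n a x + lin_eval q n a (y::'a)"
  by (simp add: lin_eval_def add_pow distrib_left sum.distrib)

lemma uniq:
  assumes "a \<in> coeff_vecs n" "a' \<in> coeff_vecs n" "lin_eval q n a = lin_eval q n (a'::nat \<Rightarrow> 'a)"
  shows "a = a'"
proof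
  fix i
  show "a i = a' i"
  proof (cases "i < n")
    case False then show ?thesis using assms(1,2) by (simp add: coeff_vecs_def)
  next
    case True
    have z: "(\<Sum>i<n. (a i - a' i) * x^(q^(2*i))) = 0" for x :: 'a
    proof -
      have "lin_eval q n a x = lin_eval q n a' x" using assms(3) by simp
      thus ?thesis by (simp add: lin_eval_def left_diff_distrib sum_subtractf)
    qed
    have inj2: "inj_on (\<lambda>i::nat. 2*i) {..<n}" by (auto simp: inj_on_def)
    have "a i - a' i = 0"
      by (rule poly_zero[where I="{..<n}" and \<pi>="\<lambda>i. 2*i" and c="\<lambda>i. a i - a' i", OF _ inj2 _ z]) (use True in auto)
    thus ?thesis by simp
  qed
qed

lemma lin_coeffs_eq: "a \<in> coeff_vecs n \<Longrightarrow> lin_coeffs q n (lin_eval q n a) = (a::nat \<Rightarrow> 'a)"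
  unfolding lin_coeffs_def by (rule the_equality) (auto intro: uniq)

end

context ffield
begin

lemma KL:
  assumes "even u" "odd v"
    and zero: "\<And>\<beta>::'a. rel_trace q n (c1 * \<beta>^(q^u) + c2 * \<beta>^(q^v)) = 0"
  shows "c1 = 0 \<and> c2 = 0"
proof -
  define e where "e i = (if even i then c1^(q^i) else c2^(q^(i-1)))" for i
  define \<pi> where "\<pi> i = (if even i then (u+i) mod (2*n) else (v+(i-1)) mod (2*n))" for i
  have sum_eq: "(\<Sum>i<2*n. e i * \<beta>^(q^(\<pi> i))) = 0" for \<beta> :: 'a
  proof -
    have "(\<Sum>i<2*n. e i * \<beta>^(q^(\<pi> i))) = (\<Sum>m<n. e (2*m) * \<beta>^(q^(\<pi> (2*m))) + e (2*m+1) * \<beta>^(q^(\<pi> (2*m+1))))"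
      by (rule sum_even_odd)
    also have "\<dots> = (\<Sum>m<n. (c1 * \<beta>^(q^u) + c2 * \<beta>^(q^v)) ^ (q^(2*m)))"
    proof (intro sum.cong refl)
      fix m
      have "(c1 * \<beta>^(q^u) + c2 * \<beta>^(q^v)) ^ (q^(2*m)) = c1^(q^(2*m)) * \<beta>^(q^(u+2*m)) + c2^(q^(2*m)) * \<beta>^(q^(v+2*m))"
        by (simp add: add_pow power_mult_distrib power_mult[symmetric] power_add)
      also have "\<beta>^(q^(u+2*m)) = \<beta>^(q^(\<pi> (2*m)))" by (simp add: \<pi>_def pow_mod[of \<beta> "u+2*m"])
      also have "\<beta>^(q^(v+2*m)) = \<beta>^(q^(\<pi> (2*m+1)))" by (simp add: \<pi>_def pow_mod[of \<beta> "v+2*m"])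
      finally show "e (2*m) * \<beta>^(q^(\<pi> (2*m))) + e (2*m+1) * \<beta>^(q^(\<pi> (2*m+1))) = (c1 * \<beta>^(q^u) + c2 * \<beta>^(q^v)) ^ (q^(2*m))"
        by (simp add: e_def)
    qed
    also have "\<dots> = 0" using zero[of \<beta>] by (simp add: rel_trace_def)
    finally show ?thesis .
  qed
  have inj: "inj_on \<pi> {..<2*n}"
  proof (rule inj_onI)
    fix i j assume ij: "i \<in> {..<2*n}" "j \<in> {..<2*n}" "\<pi> i = \<pi> j"
    show "i = j"
    proof (cases "even i"; cases "even j")
      assume "even i" "even j"
      hence "[u + i = u + j] (mod 2*n)" using ij(3) by (simp add: \<pi>_def cong_def)
      hence "[i = j] (mod 2*n)" by (simp add: cong_add_lcancel_nat)
      thus "i = j" by (rule cong_less_modulus_unique_nat) (use ij(1,2) in auto)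
    next
      assume "even i" "odd j"
      hence "even (\<pi> i)" "odd (\<pi> j)" using assms(1,2) by (auto simp: \<pi>_def even_mod_2n)
      thus "i = j" using ij(3) by simp
    next
      assume "odd i" "even j"
      hence "odd (\<pi> i)" "even (\<pi> j)" using assms(1,2) by (auto simp: \<pi>_def even_mod_2n)
      thus "i = j" using ij(3) by simp
    next
      assume "odd i" "odd j"
      have pi: "\<pi> i = (v + (i - 1)) mod (2*n)" "\<pi> j = (v + (j - 1)) mod (2*n)"
        using \<open>odd i\<close> \<open>odd j\<close> by (simp_all add: \<pi>_def)
      hence "[v + (i - 1) = v + (j - 1)] (mod 2*n)" using ij(3) by (simp add: cong_def)
      hence "[i - 1 = j - 1] (mod 2*n)" by (simp add: cong_add_lcancel_nat)
      hence "i - 1 = j - 1" by (rule cong_less_modulus_unique_nat) (use ij(1,2) in auto)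
      thus "i = j" using odd_pos[OF \<open>odd i\<close>] odd_pos[OF \<open>odd j\<close>] by linarith
    qed
  qed
  have rng: "\<pi> i < 2*n" for i using n1 by (simp add: \<pi>_def)
  have "e 0 = 0" by (rule poly_zero[OF _ inj _ sum_eq]) (use n1 rng in auto)
  moreover have "e 1 = 0" by (rule poly_zero[OF _ inj _ sum_eq]) (use n1 rng in auto)
  ultimately show ?thesis by (simp add: e_def)
qed

lemma van:
  assumes f: "f \<in> dual_code q n C" and i: "i1 < n" "i2 < n" and uv: "even u" "odd v"
    and mem: "\<And>\<beta>::'a. lin_eval q n (\<lambda>i. (if i = i1 then \<beta>^(q^u) else 0) + (if i = i2 then \<beta>^(q^v) else 0)) \<in> C"
  shows "f i1 = 0 \<and> f i2 = 0"
proof (rule KL[OF uv])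
  fix \<beta> :: 'a
  define a where "a = (\<lambda>i. (if i = i1 then \<beta>^(q^u) else 0) + (if i = i2 then \<beta>^(q^v) else 0))"
  have a: "a \<in> coeff_vecs n" using i by (auto simp: a_def coeff_vecs_def)
  have "pairing q n f (lin_coeffs q n (lin_eval q n a)) = 0"
    using f mem[of \<beta>] by (auto simp: dual_code_def a_def)
  hence "pairing q n f a = 0" using lin_coeffs_eq[OF a] by simp
  moreover have "(\<Sum>i<n. f i * a i) = f i1 * \<beta>^(q^u) + f i2 * \<beta>^(q^v)"
  proof -
    have "(\<Sum>i<n. f i * a i) = (\<Sum>i<n. (if i = i1 then f i * \<beta>^(q^u) else 0) + (if i = i2 then f i * \<beta>^(q^v) else 0))"
      by (intro sum.cong refl) (simp add: a_def distrib_left)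
    also have "\<dots> = f i1 * \<beta>^(q^u) + f i2 * \<beta>^(q^v)" using i by (simp add: sum.distrib)
    finally show ?thesis .
  qed
  ultimately show "rel_trace q n (f i1 * \<beta>^(q^u) + f i2 * \<beta>^(q^v)) = 0"
    by (simp add: pairing_def)
qed

end

context ffield
begin

lemma xmod: "(x::'a) ^ (q^(2*(m mod n))) = x ^ (q^(2*m))"
proof -
  have e: "(2*m) mod (2*n) = 2*(m mod n)" by (rule mult_mod_right[symmetric])
  have "x^(q^(2*m)) = x^(q^((2*m) mod (2*n)))" by (rule pow_mod)
  thus ?thesis unfolding e by simp
qed

lemma two_term:
  "lin_eval q n (\<lambda>i. (if i = m1 mod n then A else 0) + (if i = m2 mod n then B else 0))
   = (\<lambda>x::'a. A * x^(q^(2*m1)) + B * x^(q^(2*m2)))"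
proof
  fix x :: 'a
  have "lin_eval q n (\<lambda>i. (if i = m1 mod n then A else 0) + (if i = m2 mod n then B else 0)) x
     = (\<Sum>i<n. (if i = m1 mod n then A * x^(q^(2*i)) else 0) + (if i = m2 mod n then B * x^(q^(2*i)) else 0))"
    unfolding lin_eval_def by (intro sum.cong refl) (simp add: distrib_right)
  also have "\<dots> = A * x^(q^(2*(m1 mod n))) + B * x^(q^(2*(m2 mod n)))"
    using n1 by (simp add: sum.distrib)
  also have "\<dots> = A * x^(q^(2*m1)) + B * x^(q^(2*m2))" by (simp add: xmod)
  finally show "lin_eval q n (\<lambda>i. (if i = m1 mod n then A else 0) + (if i = m2 mod n then B else 0)) x
     = A * x^(q^(2*m1)) + B * x^(q^(2*m2))" .
qed

lemma surj_mod:
  assumes "coprime s n" "s > 0" "i < n"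
  obtains t where "t < n" "(s*t) mod n = i"
proof -
  obtain x y where xy: "s * x = n * y + gcd s n" using bezout_nat[of s n] assms(2) by auto
  hence xy': "s * x = n * y + 1" using assms(1) by simp
  define t where "t = (x*i) mod n"
  have "t < n" using n1 by (simp add: t_def)
  moreover have "(s*t) mod n = i"
  proof -
    have "(s*t) mod n = (s*(x*i)) mod n" by (simp add: t_def mod_mult_right_eq)
    also have "s*(x*i) = (s*x)*i" by simp
    also have "\<dots> = i + n*(y*i)" using xy' by (simp add: algebra_simps)
    also have "(i + n*(y*i)) mod n = i" using assms(3) by simp
    finally show ?thesis .
  qed
  ultimately show ?thesis using that by blast
qed

lemma win:
  assumes cop: "coprime s n" "s > 0" and a: "a \<le> n" and ZL: "Z + L = n"
    and zero: "\<And>t. a \<le> t \<Longrightarrow> t < a + Z \<Longrightarrow> (f::nat \<Rightarrow> 'a) ((s*t) mod n) = 0"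
    and i: "i < n" "f i \<noteq> 0"
  shows "\<exists>l<L. i = (s*(a+Z+l)) mod n"
proof -
  obtain t where t: "t < n" "(s*t) mod n = i" using surj_mod[OF cop i(1)] by blast
  define t2 where "t2 = (if a \<le> t then t else t + n)"
  have t2: "a \<le> t2" "t2 < a + n" using t a by (auto simp: t2_def)
  have "(s*t2) mod n = i"
  proof (cases "a \<le> t")
    case True then show ?thesis using t by (simp add: t2_def)
  next
    case False
    have "(s*(t+n)) mod n = (s*t + n*s) mod n" by (simp add: algebra_simps)
    also have "\<dots> = (s*t) mod n" by simp
    finally show ?thesis using False t by (simp add: t2_def)
  qed
  moreover have "\<not> t2 < a + Z"
  proof
    assume "t2 < a + Z"
    hence "f ((s*t2) mod n) = 0" using zero t2 by blast
    thus False using i(2) \<open>(s*t2) mod n = i\<close> by simp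
  qed
  ultimately show ?thesis using t2 ZL by (intro exI[of _ "t2 - (a+Z)"]) auto
qed

lemma rank_bound:
  assumes cop: "coprime s n" "s > 0" and f: "f \<in> coeff_vecs n" "f \<noteq> (\<lambda>_. 0)" and L: "L \<le> n"
    and supp: "\<And>i. i < n \<Longrightarrow> f i \<noteq> 0 \<Longrightarrow> \<exists>l<L. i = (s*(w+l)) mod n"
  shows "n - L + 1 \<le> lin_rank q n (f::nat \<Rightarrow> 'a)"
proof -
  define h where "h l = (s*(w+l)) mod n" for l
  have injh: "inj_on h {..<L}"
  proof (rule inj_onI)
    fix l l' assume ll: "l \<in> {..<L}" "l' \<in> {..<L}" "h l = h l'"
    hence "[s*(w+l) = s*(w+l')] (mod n)" by (simp add: h_def cong_def)
    hence "[w+l = w+l'] (mod n)" using cop(1) by (simp add: cong_mult_lcancel_nat)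
    hence "[l = l'] (mod n)" by (simp add: cong_add_lcancel_nat)
    thus "l = l'" by (rule cong_less_modulus_unique_nat) (use ll L in auto)
  qed
  define c where "c l = f (h l)" for l
  define P where "P y = (\<Sum>l<L. c l * y^(q^(2*s*l)))" for y :: 'a
  have feq: "lin_eval q n f x = P (x^(q^(2*s*w)))" for x
  proof -
    have sub: "h ` {..<L} \<subseteq> {..<n}" using n1 by (auto simp: h_def)
    have "lin_eval q n f x = (\<Sum>i\<in>h ` {..<L}. f i * x^(q^(2*i)))"
      unfolding lin_eval_def
    proof (rule sum.mono_neutral_right[OF _ sub])
      show "\<forall>i\<in>{..<n} - h ` {..<L}. f i * x ^ q ^ (2 * i) = 0"
      proof
        fix i assume "i \<in> {..<n} - h ` {..<L}"
        hence "i < n" "i \<notin> h ` {..<L}" by auto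
        have "f i = 0"
        proof (rule ccontr)
          assume "f i \<noteq> 0"
          then obtain l where "l < L" "i = h l" using supp[OF \<open>i < n\<close>] by (auto simp: h_def)
          thus False using \<open>i \<notin> h ` {..<L}\<close> by auto
        qed
        thus "f i * x ^ q ^ (2 * i) = 0" by simp
      qed
    qed simp
    also have "\<dots> = (\<Sum>l<L. f (h l) * x^(q^(2*(h l))))"
      by (simp add: sum.reindex[OF injh])
    also have "\<dots> = P (x^(q^(2*s*w)))"
      unfolding P_def c_def
    proof (intro sum.cong refl)
      fix l
      have "x^(q^(2*(h l))) = x^(q^(2*(s*(w+l))))" unfolding h_def by (rule xmod)
      also have "\<dots> = (x^(q^(2*s*w)))^(q^(2*s*l))"
        by (simp add: power_mult[symmetric] power_add[symmetric] algebra_simps)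
      finally show "f (h l) * x^(q^(2*(h l))) = f (h l) * (x^(q^(2*s*w)))^(q^(2*s*l))" by simp
    qed
    finally show ?thesis .
  qed
  obtain i0 where i0: "f i0 \<noteq> 0" using f(2) by auto
  have "i0 < n" using i0 f(1) by (auto simp: coeff_vecs_def not_less[symmetric])
  then obtain l0 where l0: "l0 < L" "c l0 \<noteq> 0" using supp[OF _ i0] i0 by (auto simp: c_def h_def)
  define K where "K = {l. l < L \<and> c l \<noteq> 0}"
  define k where "k = Max K"
  have finK: "finite K" "K \<noteq> {}" using l0 by (auto simp: K_def)
  have k: "k < L" "c k \<noteq> 0" using Max_in[OF finK] by (auto simp: k_def K_def)
  have kmax: "c l = 0" if "k < l" "l < L" for l
  proof (rule ccontr)
    assume "c l \<noteq> 0"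
    hence "l \<in> K" using that by (auto simp: K_def)
    hence "l \<le> k" unfolding k_def using finK(1) by (simp add: Max_ge)
    thus False using that by simp
  qed
  have Peq: "P y = (\<Sum>l\<le>k. c l * y^(q^(2*s*l)))" for y
    unfolding P_def
    by (rule sum.mono_neutral_left[symmetric]) (use k kmax in auto)
  have cardP: "card {y. P y = 0} \<le> (q^2)^k"
    using ker_bound[of s c k, OF cop k(2)] by (simp add: Peq)
  have "card {x. lin_eval q n f x = 0} \<le> card {y. P y = 0}"
  proof (rule card_inj_on_le[where f="\<lambda>x. x^(q^(2*s*w))"])
    show "inj_on (\<lambda>x::'a. x^(q^(2*s*w))) {x. lin_eval q n f x = 0}"
      by (auto simp: inj_on_def intro: inj_pow)
  qed (auto simp: feq)
  also have "\<dots> \<le> (q^2)^(L-1)"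
  proof -
    have "(q^2)^k \<le> (q^2)^(L-1)" using k(1) Qgt1 by (intro power_increasing) auto
    thus ?thesis using cardP by linarith
  qed
  finally have ker: "card {x. lin_eval q n f x = 0} \<le> (q^2)^(L-1)" .
  have "card (UNIV::'a set) \<le> card {x. lin_eval q n f x = 0} * card (range (lin_eval q n f))"
    by (rule card_ker_im) (rule lin_eval_add)
  also have "\<dots> \<le> (q^2)^(L-1) * card (range (lin_eval q n f))" using ker by simp
  finally have fin1: "card (UNIV::'a set) \<le> (q^2)^(L-1) * card (range (lin_eval q n f))" .
  have "card (UNIV::'a set) = (q^2)^n" by (simp add: card power_mult)
  also have "n = (L-1) + (n-L+1)" using l0(1) L by simp
  also have "(q^2)^((L-1) + (n-L+1)) = (q^2)^(L-1) * (q^2)^(n-L+1)" by (rule power_add)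
  finally have "(q^2)^(L-1) * (q^2)^(n-L+1) \<le> (q^2)^(L-1) * card (range (lin_eval q n f))"
    using fin1 by simp
  hence "(q^2)^(n-L+1) \<le> card (range (lin_eval q n f))" using Qgt1 by (subst (asm) mult_le_cancel1) auto
  thus ?thesis unfolding lin_rank_def by (rule dim_lower)
qed

end

lemma (in ffield) zero_pow [simp]: "(0::'a) ^ (q^e) = 0"
  using q2 by (simp add: power_0_left)

theorem theorem5p3:
  fixes q n d s :: nat
  assumes "prime_power q"
    and "card (UNIV :: 'a::{field,finite} set) = q ^ (2 * n)"
    and "n \<ge> 2"
    and "odd s" and "s > 0" and "coprime s n"
    and "1 \<le> d" and "d \<le> n - 1"
  shows "(odd (n + d) \<longrightarrow> is_design q n (H_code q n d s :: ('a \<Rightarrow> 'a) set) (n - d + 1))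
       \<and> (odd n \<and> odd d \<longrightarrow> is_design q n (E_code q n d s :: ('a \<Rightarrow> 'a) set) (n - d + 1))"
proof -
  interpret ffield q n "TYPE('a)" by unfold_locales (use assms in auto)
  have n1: "n \<ge> 1" using assms(3) by simp
  have cop: "coprime s n" "s > 0" using assms by auto
  have H: "odd (n + d) \<longrightarrow> is_design q n (H_code q n d s :: ('a \<Rightarrow> 'a) set) (n - d + 1)"
  proof
    assume odd: "odd (n + d)"
    define J where "J = (n - d + 1) div 2"
    have J2: "2*J = n - d + 1" using odd assms(7,8) unfolding J_def by presburger
    have J1: "1 \<le> J" using J2 assms(8) by linarith
    show "is_design q n (H_code q n d s :: ('a \<Rightarrow> 'a) set) (n - d + 1)"
      unfolding is_design_def
    proof (intro ballI impI)
      fix f :: "nat \<Rightarrow> 'a"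
      assume fD: "f \<in> dual_code q n (H_code q n d s)" and f0: "f \<noteq> (\<lambda>_. 0)"
      have fc: "f \<in> coeff_vecs n" using fD by (simp add: dual_code_def herm_set_def)
      have van_j: "f ((s*(n-j+1)) mod n) = 0 \<and> f ((s*j) mod n) = 0" if j: "1 \<le> j" "j \<le> J" for j
      proof (rule van[OF fD])
        show "(s*(n-j+1)) mod n < n" "(s*j) mod n < n" using n1 by auto
        show "even (2*s*(n-j+1))" "odd s" using assms by auto
        fix \<beta> :: 'a
        define b where "b = (\<lambda>j'::nat. if j' = j then \<beta> else 0)"
        have "lin_eval q n (\<lambda>i. (if i = (s*(n-j+1)) mod n then \<beta>^(q^(2*s*(n-j+1))) else 0)
                 + (if i = (s*j) mod n then \<beta>^(q^s) else 0))
              = (\<lambda>x. \<beta>^(q^(2*s*(n-j+1))) * x^(q^(2*(s*(n-j+1)))) + \<beta>^(q^s) * x^(q^(2*(s*j))))"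
          by (rule two_term)
        also have "\<dots> = (\<lambda>x. \<Sum>j'\<in>{1..(n - d + 1) div 2}.
             (b j' * x) ^ (q ^ (2 * s * (n - j' + 1))) + b j' ^ (q ^ s) * x ^ (q ^ (2 * s * j')))"
        proof
          fix x :: 'a
          have "(\<Sum>j'\<in>{1..(n - d + 1) div 2}.
               (b j' * x) ^ (q ^ (2 * s * (n - j' + 1))) + b j' ^ (q ^ s) * x ^ (q ^ (2 * s * j')))
             = (\<Sum>j'\<in>{1..J}. if j' = j then (\<beta> * x) ^ (q ^ (2 * s * (n - j + 1))) + \<beta> ^ (q ^ s) * x ^ (q ^ (2 * s * j)) else 0)"
            unfolding J_def by (intro sum.cong refl) (use q2 in \<open>simp add: b_def\<close>)
          also have "\<dots> = (\<beta> * x) ^ (q ^ (2 * s * (n - j + 1))) + \<beta> ^ (q ^ s) * x ^ (q ^ (2 * s * j))"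
            using j by simp
          also have "\<dots> = \<beta>^(q^(2*s*(n-j+1))) * x^(q^(2*(s*(n-j+1)))) + \<beta>^(q^s) * x^(q^(2*(s*j)))"
            by (simp add: power_mult_distrib mult.assoc)
          finally show "\<beta>^(q^(2*s*(n-j+1))) * x^(q^(2*(s*(n-j+1)))) + \<beta>^(q^s) * x^(q^(2*(s*j)))
             = (\<Sum>j'\<in>{1..(n - d + 1) div 2}.
               (b j' * x) ^ (q ^ (2 * s * (n - j' + 1))) + b j' ^ (q ^ s) * x ^ (q ^ (2 * s * j')))" by simp
        qed
        finally show "lin_eval q n (\<lambda>i. (if i = (s*(n-j+1)) mod n then \<beta>^(q^(2*s*(n-j+1))) else 0)
                 + (if i = (s*j) mod n then \<beta>^(q^s) else 0)) \<in> H_code q n d s"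
          unfolding H_code_def by blast
      qed
      have zero: "f ((s*t) mod n) = 0" if t: "n+1-J \<le> t" "t < n+1-J + 2*J" for t
      proof (cases "t \<le> n")
        case True
        have jj: "1 \<le> n+1-t" "n+1-t \<le> J" using t True by auto
        have "n-(n+1-t)+1 = t" using True t J1 J2 assms(7) by arith
        thus ?thesis using van_j[OF jj] by simp
      next
        case False
        define j where "j = t - n"
        have jj: "1 \<le> j" "j \<le> J" using False t J1 J2 assms(7) unfolding j_def by arith+
        have "t = j + n" using False by (simp add: j_def)
        hence "(s*t) mod n = (s*j + n*s) mod n" by (simp add: algebra_simps)
        also have "\<dots> = (s*j) mod n" by simp
        finally show ?thesis using van_j[OF jj] by simp
      qed
      have supp: "\<exists>l<n-2*J. i = (s*((n+1-J) + 2*J + l)) mod n" if i: "i < n" "f i \<noteq> 0" for i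
        by (rule win[OF cop _ _ zero i]) (use J1 J2 assms(3,7,8) in auto)
      have "n - (n-2*J) + 1 \<le> lin_rank q n f"
        by (rule rank_bound[OF cop fc f0 _ supp]) auto
      thus "lin_rank q n f \<notin> {1..n - d + 1}" using J2 assms(7,8) by auto
    qed
  qed
  have E: "odd n \<and> odd d \<longrightarrow> is_design q n (E_code q n d s :: ('a \<Rightarrow> 'a) set) (n - d + 1)"
  proof
    assume odd: "odd n \<and> odd d"
    define J where "J = (n - d) div 2"
    define h0 where "h0 = (n + 1) div 2"
    have J2: "2*J = n - d" using odd assms(7,8) unfolding J_def by presburger
    have H2: "2*h0 = n + 1" using odd unfolding h0_def by presburger
    have Jh: "J < h0" using J2 H2 by linarith
    show "is_design q n (E_code q n d s :: ('a \<Rightarrow> 'a) set) (n - d + 1)"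
      unfolding is_design_def
    proof (intro ballI impI)
      fix f :: "nat \<Rightarrow> 'a"
      assume fD: "f \<in> dual_code q n (E_code q n d s)" and f0: "f \<noteq> (\<lambda>_. 0)"
      have fc: "f \<in> coeff_vecs n" using fD by (simp add: dual_code_def herm_set_def)
      have eh: "2*(s*h0) = s*(n+1)" using H2 by (metis mult.left_commute)
      have van_0: "f ((s*h0) mod n) = 0"
      proof -
        have "f ((s*h0) mod n) = 0 \<and> f ((s*h0) mod n) = 0"
        proof (rule van[OF fD])
          show "(s*h0) mod n < n" "(s*h0) mod n < n" using n1 by auto
          show "even (s*(n+1))" "odd (n + s*(n+1))" using odd by auto
          fix \<beta> :: 'a
          define b0 where "b0 = \<beta> + \<beta>^(q^n)"
          have b0: "b0 ^ (q^n) = b0"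
          proof -
            have "b0 ^ (q^n) = \<beta>^(q^n) + (\<beta>^(q^n))^(q^n)" by (simp add: b0_def add_pow)
            also have "(\<beta>^(q^n))^(q^n) = \<beta>^(q^(2*n))" by (simp add: power_mult[symmetric] power_add[symmetric] mult_2)
            also have "\<dots> = \<beta>" by (rule pow_card)
            finally show ?thesis by (simp add: b0_def add.commute)
          qed
          have "lin_eval q n (\<lambda>i. (if i = (s*h0) mod n then \<beta>^(q^(s*(n+1))) else 0)
                 + (if i = (s*h0) mod n then \<beta>^(q^(n + s*(n+1))) else 0))
              = (\<lambda>x. \<beta>^(q^(s*(n+1))) * x^(q^(2*(s*h0))) + \<beta>^(q^(n + s*(n+1))) * x^(q^(2*(s*h0))))"
            by (rule two_term)
          also have "\<dots> = (\<lambda>x. (b0 * x) ^ (q ^ (s * (n + 1))) + (\<Sum>j\<in>{1..(n - d) div 2}.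
                 ((\<lambda>_. 0) j * x) ^ (q ^ (s * (n + 2 * j + 1))) + (\<lambda>_. 0) j ^ (q ^ s) * x ^ (q ^ (s * (n - 2 * j + 1)))))"
          proof
            fix x :: 'a
            have "(b0 * x) ^ (q ^ (s * (n + 1))) = (\<beta>^(q^(s*(n+1))) + (\<beta>^(q^n))^(q^(s*(n+1)))) * x^(q^(s*(n+1)))"
              by (simp add: b0_def add_pow power_mult_distrib)
            also have "(\<beta>^(q^n))^(q^(s*(n+1))) = \<beta>^(q^(n + s*(n+1)))"
              by (simp add: power_mult[symmetric] power_add[symmetric])
            finally have "(b0 * x) ^ (q ^ (s * (n + 1))) = \<beta>^(q^(s*(n+1))) * x^(q^(2*(s*h0))) + \<beta>^(q^(n + s*(n+1))) * x^(q^(2*(s*h0)))"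
              by (simp add: eh distrib_right)
            thus "\<beta>^(q^(s*(n+1))) * x^(q^(2*(s*h0))) + \<beta>^(q^(n + s*(n+1))) * x^(q^(2*(s*h0)))
               = (b0 * x) ^ (q ^ (s * (n + 1))) + (\<Sum>j\<in>{1..(n - d) div 2}.
                 ((\<lambda>_. 0) j * x) ^ (q ^ (s * (n + 2 * j + 1))) + (\<lambda>_. 0) j ^ (q ^ s) * x ^ (q ^ (s * (n - 2 * j + 1))))"
              by simp
          qed
          finally have EQ: "lin_eval q n (\<lambda>i. (if i = (s*h0) mod n then \<beta>^(q^(s*(n+1))) else 0)
                 + (if i = (s*h0) mod n then \<beta>^(q^(n + s*(n+1))) else 0)) = (\<lambda>x. (b0 * x) ^ (q ^ (s * (n + 1))) + (\<Sum>j\<in>{1..(n - d) div 2}.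
                 ((\<lambda>_. 0) j * x) ^ (q ^ (s * (n + 2 * j + 1))) + (\<lambda>_. 0) j ^ (q ^ s) * x ^ (q ^ (s * (n - 2 * j + 1)))))" .
          show "lin_eval q n (\<lambda>i. (if i = (s*h0) mod n then \<beta>^(q^(s*(n+1))) else 0)
                 + (if i = (s*h0) mod n then \<beta>^(q^(n + s*(n+1))) else 0)) \<in> E_code q n d s"
            unfolding E_code_def by (intro CollectI exI[of _ b0] exI[of _ "\<lambda>_::nat. 0::'a"] conjI EQ b0)
        qed
        thus ?thesis by simp
      qed
      have van_j: "f ((s*(h0+j)) mod n) = 0 \<and> f ((s*(h0-j)) mod n) = 0" if j: "1 \<le> j" "j \<le> J" for j
      proof (rule van[OF fD])
        show "(s*(h0+j)) mod n < n" "(s*(h0-j)) mod n < n" using n1 by auto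
        show "even (s*(n+2*j+1))" "odd s" using assms odd by auto
        fix \<beta> :: 'a
        define b where "b = (\<lambda>j'::nat. if j' = j then \<beta> else 0)"
        have e1: "2*(s*(h0+j)) = s*(n+2*j+1)"
        proof -
          have "2*(h0+j) = n+2*j+1" using H2 by simp
          thus ?thesis by (metis mult.left_commute)
        qed
        have e2: "2*(s*(h0-j)) = s*(n-2*j+1)"
        proof -
          have "2*(h0-j) = n-2*j+1" using H2 Jh j by simp
          thus ?thesis by (metis mult.left_commute)
        qed
        have "lin_eval q n (\<lambda>i. (if i = (s*(h0+j)) mod n then \<beta>^(q^(s*(n+2*j+1))) else 0)
                 + (if i = (s*(h0-j)) mod n then \<beta>^(q^s) else 0))
              = (\<lambda>x. \<beta>^(q^(s*(n+2*j+1))) * x^(q^(2*(s*(h0+j)))) + \<beta>^(q^s) * x^(q^(2*(s*(h0-j)))))"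
          by (rule two_term)
        also have "\<dots> = (\<lambda>x. (0 * x) ^ (q ^ (s * (n + 1))) + (\<Sum>j'\<in>{1..(n - d) div 2}.
                 (b j' * x) ^ (q ^ (s * (n + 2 * j' + 1))) + b j' ^ (q ^ s) * x ^ (q ^ (s * (n - 2 * j' + 1)))))"
        proof
          fix x :: 'a
          have "(\<Sum>j'\<in>{1..(n - d) div 2}.
                 (b j' * x) ^ (q ^ (s * (n + 2 * j' + 1))) + b j' ^ (q ^ s) * x ^ (q ^ (s * (n - 2 * j' + 1))))
             = (\<Sum>j'\<in>{1..J}. if j' = j then (\<beta> * x) ^ (q ^ (s * (n + 2 * j + 1))) + \<beta> ^ (q ^ s) * x ^ (q ^ (s * (n - 2 * j + 1))) else 0)"
            unfolding J_def by (intro sum.cong refl) (simp add: b_def)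
          also have "\<dots> = (\<beta> * x) ^ (q ^ (s * (n + 2 * j + 1))) + \<beta> ^ (q ^ s) * x ^ (q ^ (s * (n - 2 * j + 1)))"
            using j by simp
          also have "\<dots> = \<beta>^(q^(s*(n+2*j+1))) * x^(q^(2*(s*(h0+j)))) + \<beta>^(q^s) * x^(q^(2*(s*(h0-j))))"
            by (simp add: power_mult_distrib e1 e2)
          finally show "\<beta>^(q^(s*(n+2*j+1))) * x^(q^(2*(s*(h0+j)))) + \<beta>^(q^s) * x^(q^(2*(s*(h0-j))))
             = (0 * x) ^ (q ^ (s * (n + 1))) + (\<Sum>j'\<in>{1..(n - d) div 2}.
                 (b j' * x) ^ (q ^ (s * (n + 2 * j' + 1))) + b j' ^ (q ^ s) * x ^ (q ^ (s * (n - 2 * j' + 1))))"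
            by simp
        qed
        finally show "lin_eval q n (\<lambda>i. (if i = (s*(h0+j)) mod n then \<beta>^(q^(s*(n+2*j+1))) else 0)
                 + (if i = (s*(h0-j)) mod n then \<beta>^(q^s) else 0)) \<in> E_code q n d s"
          unfolding E_code_def by (intro CollectI exI[of _ 0] exI[of _ b]) simp
      qed
      have zero: "f ((s*t) mod n) = 0" if t: "h0-J \<le> t" "t < h0-J + (2*J+1)" for t
      proof -
        consider "t = h0" | "h0 < t" | "t < h0" by linarith
        then show ?thesis
        proof cases
          case 1 then show ?thesis using van_0 by simp
        next
          case 2
          have jj: "1 \<le> t - h0" "t - h0 \<le> J" using 2 t Jh by arith+
          have "h0 + (t - h0) = t" using 2 by simp
          thus ?thesis using van_j[OF jj] by simp
        next
          case 3
          have jj: "1 \<le> h0 - t" "h0 - t \<le> J" using 3 t Jh by arith+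
          have "h0 - (h0 - t) = t" using 3 by simp
          thus ?thesis using van_j[OF jj] by simp
        qed
      qed
      have supp: "\<exists>l<n-(2*J+1). i = (s*((h0-J) + (2*J+1) + l)) mod n" if i: "i < n" "f i \<noteq> 0" for i
        by (rule win[OF cop _ _ zero i]) (use J2 H2 Jh assms(3,7,8) in auto)
      have "n - (n-(2*J+1)) + 1 \<le> lin_rank q n f"
        by (rule rank_bound[OF cop fc f0 _ supp]) auto
      thus "lin_rank q n f \<notin> {1..n - d + 1}" using J2 assms(7,8) by auto
    qed
  qed
  show ?thesis using H E by blast
qed

end
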